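(* Let $f_0, g_0, \omega > 0$, let $p,q>0$ with $pq>1$, and let $C_p, C_q > 0$. Let $T>0$ and let $(f,g) \in \big(C^1([0,T))\big)^2$ be non-negative functions solving \[ \begin{cases} \frac{d}{dt} f(t) + \frac{\omega}{q+1} f(t) = (p+1) C_p\, g(t)^p, & t \in [0,T),\\ \frac{d}{dt} g(t) + \frac{\omega}{p+1} g(t) = (q+1) C_q\, f(t)^q, & t \in [0,T),\\ f(0) = f_0,\quad g(0) = g_0. \end{cases} \] Then for all $0 \le t < T$, \[ C_q f(t)^{q+1} e^{\omega t} - C_q f_0^{q+1} = C_p g(t)^{p+1} e^{\omega t} - C_p g_0^{p+1}. \] Moreover, if \[ \max\Big( 2^{\frac{p+1}{q+1}\frac{pq}{pq-1}} (q+1)^{-\frac{p+1}{pq-1}} (p+1)^{-\frac{p+1}{pq-1}} \omega^{\frac{p+1}{pq-1}} C_p^{-\frac{1}{pq-1}} C_q^{-\frac{p}{pq-1}},\ C_q^{-\frac{1}{q+1}} C_p^{\frac{1}{q+1}} g_0^{\frac{p+1}{q+1}} \Big) < f_0, \] then for all $0 \le t < T$, \[ e^{\frac{\omega}{p+1} t} g(t) \ge \Big\{ \Big(\frac{C_p}{C_q}\Big)^{\frac{pq-1}{(p+1)(q+1)}} f_0^{-\frac{pq-1}{p+1}} - 2^{-\frac{pq}{q+1}} (q+1)(p+1)\omega^{-1} C_q^{\frac{1}{q+1}} C_p^{\frac{q}{q+1}} \Big(1 - e^{-\frac{\omega(pq-1)}{(p+1)(q+1)} t}\Big) \Big\}^{-\frac{q+1}{pq-1}}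 - \big( C_q C_p^{-1} f_0^{q+1} - g_0^{p+1} \big)^{\frac{1}{p+1}}, \] and \[ T \le -\frac{(q+1)(p+1)}{\omega(pq-1)} \log\Big( 1 - \frac{2^{\frac{pq}{q+1}}}{(q+1)(p+1)}\, \omega\, C_q^{-\frac{p}{p+1}} C_p^{-\frac{1}{p+1}} f_0^{-\frac{pq-1}{p+1}} \Big). \] *)

theory Defs
  imports "HOL-Analysis.Analysis"
begin

end

theory Submission imports Defs "HOL-Analysis.Analysis" begin

lemma mono_helper:
  fixes h h' :: "real \<Rightarrow> real" and T t :: real
  assumes d: "\<And>t. t \<in> {0..<T} \<Longrightarrow> (h has_real_derivative h' t) (at t within {0..<T})"
    and nn: "\<And>t. t \<in> {0<..<T} \<Longrightarrow> h' t \<ge> 0" and t: "t \<in> {0..<T}"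
  shows "h 0 \<le> h t"
proof (rule DERIV_nonneg_imp_increasing_open[of 0 t h])
  show "0 \<le> t" using t by simp
  have "continuous (at x within {0..<T}) h" if "x \<in> {0..<T}" for x
    using DERIV_continuous[OF d[OF that]] .
  then have "continuous_on {0..<T} h"
    by (simp add: continuous_on_eq_continuous_within)
  then show "continuous_on {0..t} h"
    by (rule continuous_on_subset) (use t in auto)
  fix x assume x: "0 < x" "x < t"
  then have xT: "x \<in> {0<..<T}" using t by auto
  then have xT': "x \<in> {0..<T}" by simp
  have "(h has_real_derivative h' x) (at x within {0<..<T})"
    by (rule has_field_derivative_subset[OF d[OF xT']]) auto
  moreover have "at x within {0<..<T} = at x"
    by (rule at_within_open) (use xT in auto)
  ultimately have "(h has_real_derivative h' x) (at x)"
    by simp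
  then show "\<exists>y. (h has_real_derivative y) (at x) \<and> 0 \<le> y" using nn[OF xT] by blast
qed

lemma exp_mult_deriv:
  fixes f :: "real \<Rightarrow> real"
  assumes "(f has_real_derivative f'') (at s within S)"
  shows "((\<lambda>t. exp (c * t) * f t) has_real_derivative (exp (c * s) * c * f s + exp (c * s) * f'')) (at s within S)"
  using assms by (auto intro!: derivative_eq_intros simp: algebra_simps)

lemma convex_two:
  fixes x y a :: real
  assumes "x > 0" "y > 0" "a \<ge> 1"
  shows "(x + y) powr a \<le> 2 powr (a - 1) * (x powr a + y powr a)"
proof -
  have "((1 - 1/2) *\<^sub>R x + (1/2) *\<^sub>R y) powr a \<le> (1 - 1/2) * x powr a + (1/2) * y powr a"
    by (rule convex_onD[OF powr_convex[OF assms(3)]]) (use assms in auto)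
  then have h: "((x + y) / 2) powr a \<le> (x powr a + y powr a) / 2" by (simp add: field_simps)
  have "(x + y) powr a = 2 powr a * ((x + y) / 2) powr a"
    by (simp add: powr_divide assms less_imp_le)
  also have "\<dots> \<le> 2 powr a * ((x powr a + y powr a) / 2)"
    using h by (intro mult_left_mono) auto
  also have "\<dots> = 2 powr (a - 1) * (x powr a + y powr a)"
    by (simp add: powr_diff)
  finally show ?thesis .
qed

lemma superadd:
  fixes x y a :: real
  assumes "x > 0" "y > 0" "a \<ge> 1"
  shows "x powr a + y powr a \<le> (x + y) powr a"
proof -
  have e1: "x powr a = x * x powr (a - 1)" and e2: "y powr a = y * y powr (a - 1)"
    using assms by (simp_all add: powr_diff)
  have m1: "x powr (a - 1) \<le> (x + y) powr (a - 1)" and m2: "y powr (a - 1) \<le> (x + y) powr (a - 1)"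
    using assms by (auto intro!: powr_mono2)
  have "x * x powr (a - 1) \<le> x * (x + y) powr (a - 1)"
    using m1 assms(1) by (simp add: mult_left_mono)
  moreover have "y * y powr (a - 1) \<le> y * (x + y) powr (a - 1)"
    using m2 assms(2) by (simp add: mult_left_mono)
  moreover have "x * (x + y) powr (a - 1) + y * (x + y) powr (a - 1) = (x + y) powr a" using assms
    by (simp add: powr_diff add_divide_distrib[symmetric] distrib_right[symmetric])
  ultimately show ?thesis using e1 e2 by linarith
qed

theorem corollary2p4:
  fixes f g f' g' :: "real \<Rightarrow> real"
    and f0 g0 \<omega> p q Cp Cq T :: real
  assumes f0_pos: "f0 > 0" and g0_pos: "g0 > 0" and \<omega>_pos: "\<omega> > 0"
    and p_pos: "p > 0" and q_pos: "q > 0" and pq: "p * q > 1"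
    and Cp_pos: "Cp > 0" and Cq_pos: "Cq > 0" and T_pos: "T > 0"
    and f_deriv: "\<And>t. t \<in> {0..<T} \<Longrightarrow> (f has_real_derivative f' t) (at t within {0..<T})"
    and g_deriv: "\<And>t. t \<in> {0..<T} \<Longrightarrow> (g has_real_derivative g' t) (at t within {0..<T})"
    and f'_cont: "continuous_on {0..<T} f'"
    and g'_cont: "continuous_on {0..<T} g'"
    and f_nonneg: "\<And>t. t \<in> {0..<T} \<Longrightarrow> f t \<ge> 0"
    and g_nonneg: "\<And>t. t \<in> {0..<T} \<Longrightarrow> g t \<ge> 0"
    and f_ode: "\<And>t. t \<in> {0..<T} \<Longrightarrow> f' t + \<omega> / (q + 1) * f t = (p + 1) * Cp * g t powr p"
    and g_ode: "\<And>t. t \<in> {0..<T} \<Longrightarrow> g' t + \<omega> / (p + 1) * g t = (q + 1) * Cq * f t powr q"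
    and f_init: "f 0 = f0" and g_init: "g 0 = g0"
  shows "(\<forall>t \<in> {0..<T}.
            Cq * f t powr (q + 1) * exp (\<omega> * t) - Cq * f0 powr (q + 1)
          = Cp * g t powr (p + 1) * exp (\<omega> * t) - Cp * g0 powr (p + 1))
       \<and> (max (2 powr ((p + 1) / (q + 1) * (p * q / (p * q - 1)))
                 * (q + 1) powr (- (p + 1) / (p * q - 1))
                 * (p + 1) powr (- (p + 1) / (p * q - 1))
                 * \<omega> powr ((p + 1) / (p * q - 1))
                 * Cp powr (- 1 / (p * q - 1))
                 * Cq powr (- p / (p * q - 1)))
               (Cq powr (- 1 / (q + 1)) * Cp powr (1 / (q + 1)) * g0 powr ((p + 1) / (q + 1)))
             < f0
          \<longrightarrow> (\<forall>t \<in> {0..<T}.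
                exp (\<omega> / (p + 1) * t) * g t \<ge>
                  ((Cp / Cq) powr ((p * q - 1) / ((p + 1) * (q + 1))) * f0 powr (- (p * q - 1) / (p + 1))
                   - 2 powr (- (p * q) / (q + 1)) * (q + 1) * (p + 1) * (1 / \<omega>)
                     * Cq powr (1 / (q + 1)) * Cp powr (q / (q + 1))
                     * (1 - exp (- (\<omega> * (p * q - 1) / ((p + 1) * (q + 1))) * t)))
                  powr (- (q + 1) / (p * q - 1))
                  - (Cq * Cp powr (-1) * f0 powr (q + 1) - g0 powr (p + 1)) powr (1 / (p + 1)))
            \<and> T \<le> - ((q + 1) * (p + 1) / (\<omega> * (p * q - 1)))
                   * ln (1 - 2 powr (p * q / (q + 1)) / ((q + 1) * (p + 1)) * \<omega>
                          * Cq powr (- p / (p + 1)) * Cp powr (- 1 / (p + 1))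
                          * f0 powr (- (p * q - 1) / (p + 1))))"
proof -
  have fpos: "f t > 0" if t: "t \<in> {0..<T}" for t
  proof -
    have "exp (\<omega>/(q+1)*0) * f 0 \<le> exp (\<omega>/(q+1)*t) * f t"
    proof (rule mono_helper[where h="\<lambda>t. exp (\<omega>/(q+1)*t) * f t" and
          h'="\<lambda>t. exp (\<omega>/(q+1)*t) * (\<omega>/(q+1)) * f t + exp (\<omega>/(q+1)*t) * f' t", OF _ _ t])
      fix s assume s: "s \<in> {0..<T}"
      show "((\<lambda>t. exp (\<omega>/(q+1)*t) * f t) has_real_derivative
              (exp (\<omega>/(q+1)* s) * (\<omega>/(q+1)) * f s + exp (\<omega>/(q+1)* s) * f' s)) (at s within {0..<T})"
        by (rule exp_mult_deriv[OF f_deriv[OF s]])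
    next
      fix s assume "s \<in> {0<..<T}"
      then have s: "s \<in> {0..<T}" by auto
      have "exp (\<omega>/(q+1)* s) * (\<omega>/(q+1)) * f s + exp (\<omega>/(q+1)* s) * f' s
            = exp (\<omega>/(q+1)* s) * (f' s + \<omega> / (q + 1) * f s)"
        by (simp add: algebra_simps)
      then have "exp (\<omega>/(q+1)* s) * (\<omega>/(q+1)) * f s + exp (\<omega>/(q+1)* s) * f' s
            = exp (\<omega>/(q+1)* s) * ((p+1)*Cp*g s powr p)"
        using f_ode[OF s] by simp
      then show "0 \<le> exp (\<omega>/(q+1)* s) * (\<omega>/(q+1)) * f s + exp (\<omega>/(q+1)* s) * f' s"
        using p_pos Cp_pos by simp
    qed
    then have "0 < exp (\<omega>/(q+1)*t) * f t" using f_init f0_pos by simp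
    then show ?thesis by (simp add: zero_less_mult_iff)
  qed
  have gpos: "g t > 0" if t: "t \<in> {0..<T}" for t
  proof -
    have "exp (\<omega>/(p+1)*0) * g 0 \<le> exp (\<omega>/(p+1)*t) * g t"
    proof (rule mono_helper[where h="\<lambda>t. exp (\<omega>/(p+1)*t) * g t" and
          h'="\<lambda>t. exp (\<omega>/(p+1)*t) * (\<omega>/(p+1)) * g t + exp (\<omega>/(p+1)*t) * g' t", OF _ _ t])
      fix s assume s: "s \<in> {0..<T}"
      show "((\<lambda>t. exp (\<omega>/(p+1)*t) * g t) has_real_derivative
              (exp (\<omega>/(p+1)* s) * (\<omega>/(p+1)) * g s + exp (\<omega>/(p+1)* s) * g' s)) (at s within {0..<T})"
        by (rule exp_mult_deriv[OF g_deriv[OF s]])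
    next
      fix s assume "s \<in> {0<..<T}"
      then have s: "s \<in> {0..<T}" by auto
      have "exp (\<omega>/(p+1)* s) * (\<omega>/(p+1)) * g s + exp (\<omega>/(p+1)* s) * g' s
            = exp (\<omega>/(p+1)* s) * (g' s + \<omega> / (p + 1) * g s)"
        by (simp add: algebra_simps)
      then have "exp (\<omega>/(p+1)* s) * (\<omega>/(p+1)) * g s + exp (\<omega>/(p+1)* s) * g' s
            = exp (\<omega>/(p+1)* s) * ((q+1)*Cq*f s powr q)"
        using g_ode[OF s] by simp
      then show "0 \<le> exp (\<omega>/(p+1)* s) * (\<omega>/(p+1)) * g s + exp (\<omega>/(p+1)* s) * g' s"
        using q_pos Cq_pos by simp
    qed
    then have "0 < exp (\<omega>/(p+1)*t) * g t" using g_init g0_pos by simp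
    then show ?thesis by (simp add: zero_less_mult_iff)
  qed
  define H where "H t = Cq * f t powr (q+1) * exp (\<omega>*t) - Cp * g t powr (p+1) * exp (\<omega>*t)" for t
  define HD where "HD s = Cq * ((q+1) * f s powr q * f' s * exp (\<omega>* s) + f s powr (q+1) * (exp (\<omega>* s) * \<omega>))
     - Cp * ((p+1) * g s powr p * g' s * exp (\<omega>* s) + g s powr (p+1) * (exp (\<omega>* s) * \<omega>))" for s
  have Hd: "(H has_real_derivative HD s) (at s within {0..<T})" if s: "s \<in> {0..<T}" for s
    unfolding H_def[abs_def] HD_def
    using fpos[OF s] gpos[OF s]
    by (auto intro!: derivative_eq_intros f_deriv[OF s] g_deriv[OF s] simp: algebra_simps)
  have HD0: "HD s = 0" if s: "s \<in> {0..<T}" for s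
  proof -
    have e1: "f' s = (p + 1) * Cp * g s powr p - \<omega> / (q + 1) * f s" using f_ode[OF s] by simp
    have e2: "g' s = (q + 1) * Cq * f s powr q - \<omega> / (p + 1) * g s" using g_ode[OF s] by simp
    have e3: "f s powr (q+1) = f s powr q * f s" using fpos[OF s] by (simp add: powr_add)
    have e4: "g s powr (p+1) = g s powr p * g s" using gpos[OF s] by (simp add: powr_add)
    show ?thesis unfolding HD_def e1 e2 e3 e4 using p_pos q_pos
      by (simp add: field_simps)
  qed
  have Hconst: "H t = H 0" if t: "t \<in> {0..<T}" for t
  proof -
    have "H 0 \<le> H t"
      by (rule mono_helper[where h'=HD, OF Hd _ t]) (auto simp: HD0)
    moreover have "(\<lambda>t. - H t) 0 \<le> (\<lambda>t. - H t) t"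
      by (rule mono_helper[where h'="\<lambda>s. - HD s", OF _ _ t]) (auto simp: HD0 intro!: derivative_eq_intros Hd)
    ultimately show ?thesis by simp
  qed
  have part1: "\<forall>t \<in> {0..<T}.
            Cq * f t powr (q + 1) * exp (\<omega> * t) - Cq * f0 powr (q + 1)
          = Cp * g t powr (p + 1) * exp (\<omega> * t) - Cp * g0 powr (p + 1)"
  proof
    fix t assume t: "t \<in> {0..<T}"
    show "Cq * f t powr (q + 1) * exp (\<omega> * t) - Cq * f0 powr (q + 1)
          = Cp * g t powr (p + 1) * exp (\<omega> * t) - Cp * g0 powr (p + 1)"
      using Hconst[OF t] f_init g_init unfolding H_def by simp
  qed
  have d_pos': "p * q - 1 > 0" using pq by simp
  define a where "a = p + 1"
  define b where "b = q + 1"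
  define d where "d = p * q - 1"
  have apos: "a > 0" and bpos: "b > 0" and dpos: "d > 0" and a1: "a \<ge> 1"
    using p_pos q_pos d_pos' unfolding a_def b_def d_def by auto
  have an: "a \<noteq> 0" and bn: "b \<noteq> 0" and dn: "d \<noteq> 0" and \<omega>n: "\<omega> \<noteq> 0"
    using apos bpos dpos \<omega>_pos by auto
  define M1 where "M1 = 2 powr (a / b * (p * q / d)) * b powr (- a / d) * a powr (- a / d)
                 * \<omega> powr (a / d) * Cp powr (- 1 / d) * Cq powr (- p / d)"
  define M2 where "M2 = Cq powr (- 1 / b) * Cp powr (1 / b) * g0 powr (a / b)"
  define K' where "K' = Cq * Cp powr (-1) * f0 powr b - g0 powr a"
  define k where "k = K' powr (1 / a)"
  define c0 where "c0 = (Cp / Cq) powr (d / (a * b)) * f0 powr (- d / a)"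
  define D where "D = 2 powr (- (p * q) / b) * b * a * (1 / \<omega>) * Cq powr (1 / b) * Cp powr (q / b)"
  define E where "E t = exp (- (\<omega> * d / (a * b)) * t)" for t
  define L' where "L' = 2 powr (p * q / b) / (b * a) * \<omega> * Cq powr (- p / a) * Cp powr (- 1 / a)
                          * f0 powr (- d / a)"
  define Y where "Y t = exp (\<omega> / a * t) * g t + k" for t
  define A where "A = b * Cq powr (1 / b) * Cp powr (q / b) * 2 powr (- (p * q) / b)"
  define Yd where "Yd s = exp (\<omega> / a * s) * (b * Cq * f s powr q)" for s
  have M1pos: "M1 > 0" unfolding M1_def using \<omega>_pos apos bpos Cp_pos Cq_pos by simp
  have M2pos: "M2 > 0" unfolding M2_def using g0_pos Cp_pos Cq_pos by simp
  have c0pos: "c0 > 0" unfolding c0_def using f0_pos Cp_pos Cq_pos by simp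
  have Dpos: "D > 0" unfolding D_def using \<omega>_pos apos bpos Cp_pos Cq_pos by simp
  have L'pos: "L' > 0" unfolding L'_def using f0_pos \<omega>_pos apos bpos Cp_pos Cq_pos by simp
  have Apos: "A > 0" unfolding A_def using bpos Cp_pos Cq_pos by simp
  have Epos: "E t > 0" for t unfolding E_def by simp
  have part2: "max M1 M2 < f0 \<longrightarrow>
      (\<forall>t \<in> {0..<T}. exp (\<omega> / a * t) * g t \<ge> (c0 - D * (1 - E t)) powr (- b / d) - k)
      \<and> T \<le> - (b * a / (\<omega> * d)) * ln (1 - L')"
  proof
    assume "max M1 M2 < f0"
    then have h1: "M1 < f0" and h2: "M2 < f0" by auto
    have "ln M2 < ln f0" using h2 M2pos by simp
    then have "- 1 / b * ln Cq + 1 / b * ln Cp + a / b * ln g0 < ln f0"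
      unfolding M2_def using g0_pos Cp_pos Cq_pos by (simp add: ln_mult)
    then have "b * (- 1 / b * ln Cq + 1 / b * ln Cp + a / b * ln g0) < b * ln f0"
      using bpos by (intro mult_strict_left_mono) auto
    moreover have "b * (- 1 / b * ln Cq + 1 / b * ln Cp + a / b * ln g0) = ln Cp + a * ln g0 - ln Cq"
      using bn by (simp add: field_simps)
    ultimately have "ln Cp + a * ln g0 < ln Cq + b * ln f0"
      by linarith
    then have "ln (Cp * g0 powr a) < ln (Cq * f0 powr b)"
      using g0_pos f0_pos Cp_pos Cq_pos by (simp add: ln_mult)
    then have "Cp * g0 powr a < Cq * f0 powr b"
      using g0_pos f0_pos Cp_pos Cq_pos by simp
    then have K'pos: "K' > 0" unfolding K'_def using Cp_pos by (simp add: field_simps)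
    have "ln M1 < ln f0" using h1 M1pos by simp
    have lnL': "ln L' = d / a * (ln M1 - ln f0)"
      unfolding L'_def M1_def using f0_pos \<omega>_pos apos bpos Cp_pos Cq_pos dpos
      by (simp add: ln_mult ln_div field_simps)
    have "ln L' < 0" unfolding lnL' using \<open>ln M1 < ln f0\<close> dpos apos
      by (intro mult_pos_neg) auto
    then have L'lt1: "L' < 1" using L'pos by simp
    have c0D: "c0 = D * L'"
    proof -
      have "ln c0 = ln (D * L')"
        unfolding c0_def D_def L'_def using f0_pos \<omega>_pos apos bpos Cp_pos Cq_pos dpos
        by (simp add: ln_mult ln_div field_simps, simp add: a_def b_def d_def algebra_simps)
      then show ?thesis using c0pos Dpos L'pos by simp
    qed
    have kpos: "k > 0" unfolding k_def using K'pos by simp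
    have kpow: "k powr a = K'" unfolding k_def using K'pos an by (simp add: powr_powr)
    have Ypos: "Y t > 0" if t: "t \<in> {0..<T}" for t
      unfolding Y_def using gpos[OF t] kpos by (simp add: add_pos_pos)
    have Yderiv: "(Y has_real_derivative Yd s) (at s within {0..<T})" if s: "s \<in> {0..<T}" for s
    proof -
      have "((\<lambda>t. exp (\<omega> / a * t) * g t + k) has_real_derivative
              (exp (\<omega> / a * s) * (\<omega> / a) * g s + exp (\<omega> / a * s) * g' s + 0)) (at s within {0..<T})"
        by (rule DERIV_add[OF exp_mult_deriv[OF g_deriv[OF s]] DERIV_const])
      moreover have "exp (\<omega> / a * s) * (\<omega> / a) * g s + exp (\<omega> / a * s) * g' s + 0 = Yd s"
      proof -
        have "exp (\<omega> / a * s) * (\<omega> / a) * g s + exp (\<omega> / a * s) * g' s + 0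
            = exp (\<omega> / a * s) * (g' s + \<omega> / (p + 1) * g s)" unfolding a_def by (simp add: algebra_simps)
        then show ?thesis unfolding Yd_def b_def using g_ode[OF s] by simp
      qed
      ultimately show ?thesis unfolding Y_def[abs_def] by simp
    qed
    have Yineq: "A * E s * Y s powr (q * a / b) \<le> Yd s" if s: "s \<in> {0..<T}" for s
    proof -
      define G where "G = exp (\<omega> / a * s) * g s"
      have Gpos: "G > 0" unfolding G_def using gpos[OF s] by simp
      have Gpow: "G powr a = exp (\<omega> * s) * g s powr a"
        unfolding G_def using an by (simp add: powr_mult exp_powr_real)
      have id: "Cq * f s powr b * exp (\<omega> * s) = Cp * (G powr a + K')"
      proof -
        have "Cq * f s powr b * exp (\<omega> * s) - Cq * f0 powr b = Cp * g s powr a * exp (\<omega> * s) - Cp * g0 powr a"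
          using part1 s unfolding a_def b_def by auto
        moreover have "Cp * (exp (\<omega> * s) * g s powr a + (Cq * Cp powr (-1) * f0 powr b - g0 powr a))
            = Cp * g s powr a * exp (\<omega> * s) + Cq * f0 powr b - Cp * g0 powr a"
          using Cp_pos by (simp add: algebra_simps)
        ultimately show ?thesis unfolding Gpow K'_def by linarith
      qed
      have cv: "Y s powr a \<le> 2 powr p * (G powr a + K')"
      proof -
        have "Y s = G + k" by (simp add: Y_def G_def)
        moreover have "a - 1 = p" by (simp add: a_def)
        ultimately show ?thesis using convex_two[OF Gpos kpos a1] kpow by simp
      qed
      have "Cp * Y s powr a \<le> 2 powr p * (Cq * f s powr b * exp (\<omega> * s))"
        unfolding id using mult_left_mono[OF cv, of Cp] Cp_pos by (simp add: algebra_simps)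
      then have "ln (Cp * Y s powr a) \<le> ln (2 powr p * (Cq * f s powr b * exp (\<omega> * s)))"
        using Ypos[OF s] Cp_pos Cq_pos fpos[OF s] by simp
      then have star: "ln Cp + a * ln (Y s) \<le> p * ln 2 + (ln Cq + b * ln (f s) + \<omega> * s)"
        using Ypos[OF s] Cp_pos Cq_pos fpos[OF s] by (simp add: ln_mult)
      have "ln (Yd s) - ln (A * E s * Y s powr (q * a / b))
          = q / b * ((p * ln 2 + (ln Cq + b * ln (f s) + \<omega> * s)) - (ln Cp + a * ln (Y s)))"
        unfolding Yd_def A_def E_def using Ypos[OF s] Cp_pos Cq_pos fpos[OF s] bpos apos dpos
        by (simp add: ln_mult field_simps, simp add: a_def b_def d_def algebra_simps)
      also have "\<dots> \<ge> 0" using star q_pos bpos by simp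
      finally have "ln (A * E s * Y s powr (q * a / b)) \<le> ln (Yd s)" by simp
      then show ?thesis using Apos Epos Ypos[OF s] Cq_pos fpos[OF s] bpos unfolding Yd_def
        by simp
    qed
    define \<Phi> where "\<Phi> t = Y t powr (- d / b) + D * (1 - E t)" for t
    define \<Phi>D where "\<Phi>D s = - d / b * Y s powr (- d / b - 1) * Yd s + D * (E s * (\<omega> * d / (a * b)))" for s
    have \<Phi>deriv: "(\<Phi> has_real_derivative \<Phi>D s) (at s within {0..<T})" if s: "s \<in> {0..<T}" for s
    proof -
      have P1: "((\<lambda>t. Y t powr (- d / b)) has_real_derivative (- d / b * Y s powr (- d / b - 1) * Yd s))
          (at s within {0..<T})"
        using DERIV_chain2[OF has_real_derivative_powr[OF Ypos[OF s]] Yderiv[OF s], of "- d / b"] by simp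
      have P2: "((\<lambda>t. D * (1 - E t)) has_real_derivative D * (E s * (\<omega> * d / (a * b)))) (at s within {0..<T})"
        unfolding E_def using an bn by (auto intro!: derivative_eq_intros)
      show ?thesis unfolding \<Phi>_def[abs_def] \<Phi>D_def by (rule DERIV_add[OF P1 P2])
    qed
    have \<Phi>Dneg: "\<Phi>D s \<le> 0" if s: "s \<in> {0..<T}" for s
    proof -
      have ex: "(- d / b - 1) + q * a / b = 0"
        using bn by (simp add: field_simps, simp add: a_def b_def d_def algebra_simps)
      have "Y s powr (- d / b - 1) * (A * E s * Y s powr (q * a / b)) \<le> Y s powr (- d / b - 1) * Yd s"
        using Yineq[OF s] by (intro mult_left_mono) auto
      moreover have "Y s powr (- d / b - 1) * (A * E s * Y s powr (q * a / b)) = A * E s"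
      proof -
        have "Y s powr (- d / b - 1) * (A * E s * Y s powr (q * a / b))
            = A * E s * (Y s powr (- d / b - 1) * Y s powr (q * a / b))" by (simp add: algebra_simps)
        also have "\<dots> = A * E s * Y s powr ((- d / b - 1) + q * a / b)" by (simp add: powr_add)
        also have "\<dots> = A * E s" unfolding ex using Ypos[OF s] by simp
        finally show ?thesis .
      qed
      ultimately have Z: "A * E s \<le> Y s powr (- d / b - 1) * Yd s" by linarith
      have "D * (E s * (\<omega> * d / (a * b))) = d / b * (A * E s)"
        unfolding D_def A_def using an bn \<omega>n by (simp add: field_simps)
      then have "\<Phi>D s = d / b * (A * E s - Y s powr (- d / b - 1) * Yd s)"
        unfolding \<Phi>D_def by (simp add: algebra_simps)
      also have "\<dots> \<le> 0" using Z dpos bpos by (intro mult_nonneg_nonpos) auto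
      finally show ?thesis .
    qed
    have \<Phi>mono: "\<Phi> t \<le> \<Phi> 0" if t: "t \<in> {0..<T}" for t
    proof -
      have "(\<lambda>t. - \<Phi> t) 0 \<le> (\<lambda>t. - \<Phi> t) t"
        by (rule mono_helper[where h'="\<lambda>s. - \<Phi>D s", OF _ _ t])
           (auto intro!: derivative_eq_intros \<Phi>deriv \<Phi>Dneg)
      then show ?thesis by simp
    qed
    have Y0: "Y 0 = g0 + k" unfolding Y_def using g_init by simp
    have Y0pos: "Y 0 > 0" using Y0 g0_pos kpos by simp
    have \<Phi>0: "\<Phi> 0 \<le> c0"
    proof -
      have "g0 powr a + k powr a \<le> Y 0 powr a" unfolding Y0 by (rule superadd[OF g0_pos kpos a1])
      then have "Cq * f0 powr b \<le> Cp * Y 0 powr a"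
        unfolding kpow K'_def using Cp_pos by (simp add: field_simps)
      then have "ln (Cq * f0 powr b) \<le> ln (Cp * Y 0 powr a)"
        using Cq_pos f0_pos Cp_pos Y0pos by simp
      then have st: "ln Cq + b * ln f0 \<le> ln Cp + a * ln (Y 0)"
        using Cq_pos f0_pos Cp_pos Y0pos by (simp add: ln_mult)
      have "ln c0 - ln (Y 0 powr (- d / b)) = d / (a * b) * (ln Cp + a * ln (Y 0) - (ln Cq + b * ln f0))"
        unfolding c0_def using Cq_pos f0_pos Cp_pos Y0pos an bn by (simp add: ln_mult ln_div field_simps)
      also have "\<dots> \<ge> 0" using st apos bpos dpos by simp
      finally have "ln (Y 0 powr (- d / b)) \<le> ln c0" by simp
      moreover have "Y 0 powr (- d / b) > 0" using Y0pos by simp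
      ultimately have "Y 0 powr (- d / b) \<le> c0" using c0pos ln_le_cancel_iff by blast
      then show ?thesis unfolding \<Phi>_def E_def by simp
    qed
    have Bpos: "c0 - D * (1 - E t) > 0" and Ybound: "Y t powr (- d / b) \<le> c0 - D * (1 - E t)"
      if t: "t \<in> {0..<T}" for t
    proof -
      show "Y t powr (- d / b) \<le> c0 - D * (1 - E t)" using \<Phi>mono[OF t] \<Phi>0 unfolding \<Phi>_def by simp
      then show "c0 - D * (1 - E t) > 0"
      proof -
        have "Y t powr (- d / b) > 0" using Ypos[OF t] by simp
        then show ?thesis using \<open>Y t powr (- d / b) \<le> c0 - D * (1 - E t)\<close> by linarith
      qed
    qed
    show "(\<forall>t \<in> {0..<T}. exp (\<omega> / a * t) * g t \<ge> (c0 - D * (1 - E t)) powr (- b / d) - k)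
      \<and> T \<le> - (b * a / (\<omega> * d)) * ln (1 - L')"
    proof
      show "\<forall>t \<in> {0..<T}. exp (\<omega> / a * t) * g t \<ge> (c0 - D * (1 - E t)) powr (- b / d) - k"
      proof
        fix t assume t: "t \<in> {0..<T}"
        have "Y t = (Y t powr (- d / b)) powr (- b / d)"
          using Ypos[OF t] dn bn by (simp add: powr_powr)
        also have "\<dots> \<ge> (c0 - D * (1 - E t)) powr (- b / d)"
          using Ybound[OF t] Ypos[OF t] dpos bpos
          by (intro powr_mono2') (auto simp: divide_nonneg_pos)
        finally show "exp (\<omega> / a * t) * g t \<ge> (c0 - D * (1 - E t)) powr (- b / d) - k"
          unfolding Y_def by simp
      qed
      show "T \<le> - (b * a / (\<omega> * d)) * ln (1 - L')"
      proof (rule ccontr)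
        define ts where "ts = - (b * a / (\<omega> * d)) * ln (1 - L')"
        assume "\<not> T \<le> - (b * a / (\<omega> * d)) * ln (1 - L')"
        then have Tts: "ts < T" unfolding ts_def by simp
        have "ln (1 - L') < 0" using L'pos L'lt1 by simp
        moreover have "b * a / (\<omega> * d) > 0" using apos bpos dpos \<omega>_pos by simp
        ultimately have "(b * a / (\<omega> * d)) * ln (1 - L') < 0" by (intro mult_pos_neg)
        moreover have "ts = - ((b * a / (\<omega> * d)) * ln (1 - L'))" unfolding ts_def by simp
        ultimately have "ts \<ge> 0" by linarith
        then have tsI: "ts \<in> {0..<T}" using Tts by simp
        have "E ts = exp (ln (1 - L'))" unfolding E_def ts_def using an bn dn \<omega>n
          by (simp add: field_simps)
        also have "\<dots> = 1 - L'" using L'lt1 by simp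
        finally have "E ts = 1 - L'" .
        then have "c0 - D * (1 - E ts) = 0" using c0D by simp
        then show False using Bpos[OF tsI] by simp
      qed
    qed
  qed
  show ?thesis
    using part1 part2
    unfolding M1_def M2_def c0_def D_def E_def L'_def k_def K'_def a_def b_def d_def
    by blast
qed
end
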